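(* Let $(A,\to,1)$ be an algebra of type $(2,0)$ satisfying (Re), (M), (B) and (An). Then $(A,\to,1)$ satisfies (Ex) if and only if it satisfies (BB).
   Context: Properties, required for all $x,y,z\in A$: (Re) $x\to x=1$; (M) $1\to x=x$; (B) $(y\to z)\to((x\to y)\to(x\to z))=1$; (An) $x\to y=1$ and $y\to x=1$ imply $x=y$; (Ex) $x\to(y\to z)=y\to(x\to z)$; (BB) $(y\to z)\to((z\to x)\to(y\to x))=1$. *)

theory Defs
  imports Main
begin

text \<open>An algebra (A, imp, one) of type (2,0); the carrier A is the whole type 'a.\<close>

definition prop_Re :: "('a \<Rightarrow> 'a \<Rightarrow> 'a) \<Rightarrow> 'a \<Rightarrow> bool" where
  "prop_Re imp one \<longleftrightarrow> (\<forall>x. imp x x = one)"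

definition prop_M :: "('a \<Rightarrow> 'a \<Rightarrow> 'a) \<Rightarrow> 'a \<Rightarrow> bool" where
  "prop_M imp one \<longleftrightarrow> (\<forall>x. imp one x = x)"

definition prop_B :: "('a \<Rightarrow> 'a \<Rightarrow> 'a) \<Rightarrow> 'a \<Rightarrow> bool" where
  "prop_B imp one \<longleftrightarrow> (\<forall>x y z. imp (imp y z) (imp (imp x y) (imp x z)) = one)"

definition prop_An :: "('a \<Rightarrow> 'a \<Rightarrow> 'a) \<Rightarrow> 'a \<Rightarrow> bool" where
  "prop_An imp one \<longleftrightarrow> (\<forall>x y. imp x y = one \<and> imp y x = one \<longrightarrow> x = y)"

definition prop_Ex :: "('a \<Rightarrow> 'a \<Rightarrow> 'a) \<Rightarrow> bool" where
  "prop_Ex imp \<longleftrightarrow> (\<forall>x y z. imp x (imp y z) = imp y (imp x z))"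

definition prop_BB :: "('a \<Rightarrow> 'a \<Rightarrow> 'a) \<Rightarrow> 'a \<Rightarrow> bool" where
  "prop_BB imp one \<longleftrightarrow> (\<forall>x y z. imp (imp y z) (imp (imp z x) (imp y x)) = one)"

end

theory Submission
  imports Defs
begin

theorem theorem2p4:
  fixes imp :: "'a \<Rightarrow> 'a \<Rightarrow> 'a" and one :: 'a
  assumes "prop_Re imp one" and "prop_M imp one" and "prop_B imp one" and "prop_An imp one"
  shows "prop_Ex imp \<longleftrightarrow> prop_BB imp one"
proof
  have M: "\<And>x. imp one x = x" using assms(2) unfolding prop_M_def by blast
  have B: "\<And>x y z. imp (imp y z) (imp (imp x y) (imp x z)) = one" using assms(3) unfolding prop_B_def by blast
  have An: "\<And>x y. imp x y = one \<Longrightarrow> imp y x = one \<Longrightarrow> x = y" using assms(4) unfolding prop_An_def by blast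
  {
    assume "prop_Ex imp"
    hence Ex: "\<And>x y z. imp x (imp y z) = imp y (imp x z)" unfolding prop_Ex_def by blast
    show "prop_BB imp one" unfolding prop_BB_def
    proof (intro allI)
      fix x y z
      show "imp (imp y z) (imp (imp z x) (imp y x)) = one"
        unfolding Ex[of "imp y z" "imp z x" "imp y x"] by (rule B)
    qed
  }
  {
    assume "prop_BB imp one"
    hence BB: "\<And>x y z. imp (imp y z) (imp (imp z x) (imp y x)) = one" unfolding prop_BB_def by blast
    have trans: "\<And>a b c. imp a b = one \<Longrightarrow> imp b c = one \<Longrightarrow> imp a c = one"
    proof -
      fix a b c assume ab: "imp a b = one" and bc: "imp b c = one"
      have "imp (imp b c) (imp (imp a b) (imp a c)) = one" by (rule B)
      thus "imp a c = one" by (simp only: ab bc M)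
    qed
    have anti: "\<And>a b w. imp a b = one \<Longrightarrow> imp (imp b w) (imp a w) = one"
    proof -
      fix a b w assume ab: "imp a b = one"
      have "imp (imp a b) (imp (imp b w) (imp a w)) = one" by (rule BB)
      thus "imp (imp b w) (imp a w) = one" by (simp only: ab M)
    qed
    have K: "\<And>z x. imp z (imp (imp z x) x) = one"
    proof -
      fix z x
      have "imp (imp one z) (imp (imp z x) (imp one x)) = one" by (rule BB)
      thus "imp z (imp (imp z x) x) = one" by (simp only: M)
    qed
    have le: "\<And>x y z. imp (imp x (imp y z)) (imp y (imp x z)) = one"
    proof -
      fix x y z
      have 1: "imp (imp x (imp y z)) (imp (imp (imp y z) z) (imp x z)) = one" by (rule BB)
      have 2: "imp (imp (imp (imp y z) z) (imp x z)) (imp y (imp x z)) = one"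
        by (rule anti[OF K])
      show "imp (imp x (imp y z)) (imp y (imp x z)) = one" by (rule trans[OF 1 2])
    qed
    show "prop_Ex imp" unfolding prop_Ex_def
    proof (intro allI)
      fix x y z
      show "imp x (imp y z) = imp y (imp x z)" by (rule An[OF le le])
    qed
  }
qed

end
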